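(* Let $\phi$ be a propositional team formula (built from literals $p,\neg p$, the constant $\bot$, the constant $NE$, dependence atoms $=\!(\overline\alpha,\beta)$, inclusion atoms $\overline\alpha\subseteq\overline\alpha'$ and independence atoms $\overline\alpha\perp\overline\beta$ over classical propositional formulas, using $\wedge,\otimes,\vee,\circledast$), let $p\in Prop$, and suppose $\phi$ is downward closed. Then $\phi\models \phi[p|\top]\otimes\phi[p|\bot]$, i.e. every team satisfying $\phi$ satisfies $\phi[p|\top]\otimes\phi[p|\bot]$.
   Context: $Prop$ is a nonempty set of propositional letters. A team is a set $X$ of valuations $s:Prop\to\{0,1\}$. Semantics: $X\models\bot$ iff $X=\emptyset$; $X\models p$ iff $s(p)=1$ for all $s\in X$; $X\models\neg p$ iff $s(p)=0$ for all $s\in X$; $X\models NE$ iff $X\neq\emptyset$; $X\models\phi_1\wedge\phi_2$ iff $X\models\phi_1$ and $X\models\phi_2$; $X\models\phi_1\otimes\phi_2$ iff there are $X_1,X_2$ with $X=X_1\cup X_2$, $X_1\models\phi_1$, $X_2\models\phi_2$; $X\models\phi_1\vee\phi_2$ iff $X\models\phi_1$ or $X\models\phi_2$; $X\models\phi_1\circledast\phi_2$ iff $X=\emptyset$ or there are nonempty $X_1,X_2$ with $X=X_1\cup X_2$, $X_1\models\phi_1$, $X_2\models\phi_2$. For classical propositional formulas $\alpha$, $s(\alpha)\in\{0,1\}$ is the usual truth value and $s(\overline\alpha)$ the tuple of values; $X\models{=}(\overline\alpha,\beta)$ iff for all $s,s'\in X$, $s(\overline\alpha)=s'(\overline\alpha)$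 implies $s(\beta)=s'(\beta)$; $X\models\overline\alpha\subseteq\overline\alpha'$ iff for every $s\in X$ there is $s'\in X$ with $s(\overline\alpha)=s'(\overline\alpha')$; $X\models\overline\alpha\perp\overline\beta$ iff for all $s,s'\in X$ there is $s''\in X$ with $s''(\overline\alpha)=s(\overline\alpha)$ and $s''(\overline\beta)=s'(\overline\beta)$. $\top$ denotes $q\otimes\neg q$ for a letter $q$ (true in every team). The substitution $\phi[p|\top]$ is defined inductively: $p\mapsto\top$, $\neg p\mapsto\bot$, $\bot\mapsto\bot$, other literals and $NE$ unchanged, commuting with all connectives, and inside atoms the classical formulas are substituted classically ($p$ replaced by a true constant); $\phi[p|\bot]$ is analogous with $p\mapsto\bot$, $\neg p\mapsto\top$. A formula $\phi$ is downward closed if $X\models\phi$ and $Y\subseteq X$ imply $Y\models\phi$. *)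

theory Defs
  imports Main
begin

text \<open>Propositional letters are the elements of the type 'p (a nonempty type,
matching "Prop is a nonempty set"). A valuation is a function 'p \<Rightarrow> bool
(True = 1, False = 0).\<close>

type_synonym 'p valuation = "'p \<Rightarrow> bool"
type_synonym 'p team = "'p valuation set"

datatype 'p cform =
    CVar 'p
  | CTrue
  | CFalse
  | CNot "'p cform"
  | CAnd "'p cform" "'p cform"
  | COr "'p cform" "'p cform"
  | CImp "'p cform" "'p cform"

primrec ceval :: "'p valuation \<Rightarrow> 'p cform \<Rightarrow> bool" where
  "ceval s (CVar q) = s q"
| "ceval s CTrue = True"
| "ceval s CFalse = False"
| "ceval s (CNot a) = (\<not> ceval s a)"
| "ceval s (CAnd a b) = (ceval s a \<and> ceval s b)"
| "ceval s (COr a b) = (ceval s a \<or> ceval s b)"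
| "ceval s (CImp a b) = (ceval s a \<longrightarrow> ceval s b)"

definition cevals :: "'p valuation \<Rightarrow> 'p cform list \<Rightarrow> bool list" where
  "cevals s as = map (ceval s) as"

datatype 'p tform =
    Lit 'p
  | NLit 'p
  | TBot
  | NE
  | Dep "'p cform list" "'p cform"
  | Incl "'p cform list" "'p cform list"
  | Indep "'p cform list" "'p cform list"
  | TAnd "'p tform" "'p tform"
  | Tensor "'p tform" "'p tform"
  | TOr "'p tform" "'p tform"
  | Star "'p tform" "'p tform"

primrec sat :: "'p team \<Rightarrow> 'p tform \<Rightarrow> bool" where
  "sat X (Lit q) = (\<forall>s\<in>X. s q)"
| "sat X (NLit q) = (\<forall>s\<in>X. \<not> s q)"
| "sat X TBot = (X = {})"
| "sat X NE = (X \<noteq> {})"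
| "sat X (Dep as b) = (\<forall>s\<in>X. \<forall>s'\<in>X. cevals s as = cevals s' as \<longrightarrow> ceval s b = ceval s' b)"
| "sat X (Incl as bs) = (\<forall>s\<in>X. \<exists>s'\<in>X. cevals s as = cevals s' bs)"
| "sat X (Indep as bs) = (\<forall>s\<in>X. \<forall>s'\<in>X. \<exists>s''\<in>X.
      cevals s'' as = cevals s as \<and> cevals s'' bs = cevals s' bs)"
| "sat X (TAnd f g) = (sat X f \<and> sat X g)"
| "sat X (Tensor f g) = (\<exists>X1 X2. X = X1 \<union> X2 \<and> sat X1 f \<and> sat X2 g)"
| "sat X (TOr f g) = (sat X f \<or> sat X g)"
| "sat X (Star f g) = (X = {} \<or> (\<exists>X1 X2. X1 \<noteq> {} \<and> X2 \<noteq> {} \<and> X = X1 \<union> X2 \<and> sat X1 f \<and> sat X2 g))"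

definition downward_closed :: "'p tform \<Rightarrow> bool" where
  "downward_closed f = (\<forall>X Y. sat X f \<longrightarrow> Y \<subseteq> X \<longrightarrow> sat Y f)"

definition TTop :: "'p \<Rightarrow> 'p tform" where
  "TTop q = Tensor (Lit q) (NLit q)"

primrec csubst :: "'p \<Rightarrow> 'p cform \<Rightarrow> 'p cform \<Rightarrow> 'p cform" where
  "csubst p c (CVar q) = (if q = p then c else CVar q)"
| "csubst p c CTrue = CTrue"
| "csubst p c CFalse = CFalse"
| "csubst p c (CNot a) = CNot (csubst p c a)"
| "csubst p c (CAnd a b) = CAnd (csubst p c a) (csubst p c b)"
| "csubst p c (COr a b) = COr (csubst p c a) (csubst p c b)"
| "csubst p c (CImp a b) = CImp (csubst p c a) (csubst p c b)"

text \<open>subst_top p f = f[p|\<top>], subst_bot p f = f[p|\<bot>]. The letter q in \<top>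
is taken to be p itself (any letter works since \<top> holds in every team).\<close>
primrec subst_top :: "'p \<Rightarrow> 'p tform \<Rightarrow> 'p tform" where
  "subst_top p (Lit q) = (if q = p then TTop p else Lit q)"
| "subst_top p (NLit q) = (if q = p then TBot else NLit q)"
| "subst_top p TBot = TBot"
| "subst_top p NE = NE"
| "subst_top p (Dep as b) = Dep (map (csubst p CTrue) as) (csubst p CTrue b)"
| "subst_top p (Incl as bs) = Incl (map (csubst p CTrue) as) (map (csubst p CTrue) bs)"
| "subst_top p (Indep as bs) = Indep (map (csubst p CTrue) as) (map (csubst p CTrue) bs)"
| "subst_top p (TAnd f g) = TAnd (subst_top p f) (subst_top p g)"
| "subst_top p (Tensor f g) = Tensor (subst_top p f) (subst_top p g)"
| "subst_top p (TOr f g) = TOr (subst_top p f) (subst_top p g)"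
| "subst_top p (Star f g) = Star (subst_top p f) (subst_top p g)"

primrec subst_bot :: "'p \<Rightarrow> 'p tform \<Rightarrow> 'p tform" where
  "subst_bot p (Lit q) = (if q = p then TBot else Lit q)"
| "subst_bot p (NLit q) = (if q = p then TTop p else NLit q)"
| "subst_bot p TBot = TBot"
| "subst_bot p NE = NE"
| "subst_bot p (Dep as b) = Dep (map (csubst p CFalse) as) (csubst p CFalse b)"
| "subst_bot p (Incl as bs) = Incl (map (csubst p CFalse) as) (map (csubst p CFalse) bs)"
| "subst_bot p (Indep as bs) = Indep (map (csubst p CFalse) as) (map (csubst p CFalse) bs)"
| "subst_bot p (TAnd f g) = TAnd (subst_bot p f) (subst_bot p g)"
| "subst_bot p (Tensor f g) = Tensor (subst_bot p f) (subst_bot p g)"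
| "subst_bot p (TOr f g) = TOr (subst_bot p f) (subst_bot p g)"
| "subst_bot p (Star f g) = Star (subst_bot p f) (subst_bot p g)"

end

theory Submission
  imports Defs
begin

lemma ceval_csubst: "ceval s c = s p \<Longrightarrow> ceval s (csubst p c a) = ceval s a"
  by (induct a) auto

lemma cevals_csubst: "ceval s c = s p \<Longrightarrow> cevals s (map (csubst p c) as) = cevals s as"
  by (simp add: cevals_def ceval_csubst)

lemma T1: "s p \<Longrightarrow> ceval s (csubst p CTrue a) = ceval s a"
  by (rule ceval_csubst) simp
lemma T2: "s p \<Longrightarrow> cevals s (map (csubst p CTrue) as) = cevals s as"
  by (rule cevals_csubst) simp
lemma F1: "\<not> s p \<Longrightarrow> ceval s (csubst p CFalse a) = ceval s a"
  by (rule ceval_csubst) simp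
lemma F2: "\<not> s p \<Longrightarrow> cevals s (map (csubst p CFalse) as) = cevals s as"
  by (rule cevals_csubst) simp

lemma top_lemma: "\<forall>s\<in>Y. s p \<Longrightarrow> sat Y f \<Longrightarrow> sat Y (subst_top p f)"
proof (induct f arbitrary: Y)
  case (Lit q)
  show ?case
  proof (cases "q = p")
    case True
    have "sat Y (TTop p)" unfolding TTop_def sat.simps
      by (rule exI[of _ Y], rule exI[of _ "{}"]) (use Lit.prems in simp)
    then show ?thesis using True by simp
  qed (use Lit.prems in simp)
next
  case (NLit q)
  show ?case
  proof (cases "q = p")
    case True
    have "Y = {}"
    proof (rule equals0I)
      fix s assume s: "s \<in> Y"
      have "s p" using NLit.prems(1) s by (rule bspec)
      have aq: "\<forall>s\<in>Y. \<not> s q" using NLit.prems(2) by (simp only: sat.simps)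
      have "s p" using NLit.prems(1) s by (rule bspec)
      moreover have "\<not> s q" by (rule bspec[OF aq s])
      ultimately show False using True by simp
    qed
    then show ?thesis using True by simp
  qed (use NLit.prems in simp)
next
  case (Dep as b) show ?case unfolding subst_top.simps sat.simps
  proof (intro ballI impI)
    fix s s' assume s: "s \<in> Y" "s' \<in> Y" and e: "cevals s (map (csubst p CTrue) as) = cevals s' (map (csubst p CTrue) as)"
    have ps: "s p" "s' p" using s Dep(1) by auto
    have "cevals s as = cevals s' as" using e T2[of s p as, OF ps(1)] T2[of s' p as, OF ps(2)] by argo
    moreover have d: "\<forall>s\<in>Y. \<forall>s'\<in>Y. cevals s as = cevals s' as \<longrightarrow> ceval s b = ceval s' b" using Dep(2) by (simp only: sat.simps)
    ultimately have "ceval s b = ceval s' b" using d[rule_format, OF s(1) s(2)] by blast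
    then show "ceval s (csubst p CTrue b) = ceval s' (csubst p CTrue b)" using T1[of s p b, OF ps(1)] T1[of s' p b, OF ps(2)] by argo
  qed
next
  case (Incl as bs)
  show ?case unfolding subst_top.simps sat.simps
  proof
    fix s assume s: "s \<in> Y"
    with Incl obtain s' where "s' \<in> Y" "cevals s as = cevals s' bs" by auto
    note h = this
    have ps: "s p" "s' p" using s h(1) Incl(1) by auto
    show "\<exists>s'\<in>Y. cevals s (map (csubst p CTrue) as) = cevals s' (map (csubst p CTrue) bs)"
      by (rule bexI[of _ s']) (use h T2[of s p as, OF ps(1)] T2[of s' p bs, OF ps(2)] in simp_all)
  qed
next
  case (Indep as bs)
  show ?case unfolding subst_top.simps sat.simps
  proof (intro ballI)
    fix s s' assume s: "s \<in> Y" "s' \<in> Y"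
    with Indep obtain s'' where "s'' \<in> Y" "cevals s'' as = cevals s as" "cevals s'' bs = cevals s' bs" by force
    note h = this
    have ps: "s p" "s' p" "s'' p" using s h(1) Indep(1) by auto
    show "\<exists>s''\<in>Y. cevals s'' (map (csubst p CTrue) as) = cevals s (map (csubst p CTrue) as) \<and> cevals s'' (map (csubst p CTrue) bs) = cevals s' (map (csubst p CTrue) bs)"
      by (rule bexI[of _ s'']) (use h T2[of s p as, OF ps(1)] T2[of s' p bs, OF ps(2)] T2[of s'' p as, OF ps(3)] T2[of s'' p bs, OF ps(3)] in simp_all)
  qed
next
  case (Tensor f g)
  from Tensor.prems obtain X1 X2 where u: "Y = X1 \<union> X2" and h: "sat X1 f" "sat X2 g" by auto
  have "sat X1 (subst_top p f)" by (rule Tensor(1)) (use u h Tensor.prems in auto)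
  moreover have "sat X2 (subst_top p g)" by (rule Tensor(2)) (use u h Tensor.prems in auto)
  ultimately show ?case using u by (simp only: subst_top.simps sat.simps) blast
next
  case (Star f g)
  show ?case
  proof (cases "Y = {}")
    case False
    with Star.prems obtain X1 X2 where n: "X1 \<noteq> {}" "X2 \<noteq> {}" and u: "Y = X1 \<union> X2" and h: "sat X1 f" "sat X2 g" by auto
    have "sat X1 (subst_top p f)" by (rule Star(1)) (use u h Star.prems in auto)
    moreover have "sat X2 (subst_top p g)" by (rule Star(2)) (use u h Star.prems in auto)
    ultimately show ?thesis using u n by (simp only: subst_top.simps sat.simps) blast
  qed simp
next
  case (TOr f g)
  from TOr.prems(2) have "sat Y f \<or> sat Y g" by simp
  then show ?case
  proof
    assume "sat Y f" then have "sat Y (subst_top p f)" by (rule TOr(1)[OF TOr.prems(1)])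
    then show ?thesis by simp
  next
    assume "sat Y g" then have "sat Y (subst_top p g)" by (rule TOr(2)[OF TOr.prems(1)])
    then show ?thesis by simp
  qed
qed simp_all

lemma bot_lemma: "\<forall>s\<in>Y. \<not> s p \<Longrightarrow> sat Y f \<Longrightarrow> sat Y (subst_bot p f)"
proof (induct f arbitrary: Y)
  case (NLit q)
  show ?case
  proof (cases "q = p")
    case True
    have "sat Y (TTop p)" unfolding TTop_def sat.simps
      by (rule exI[of _ "{}"], rule exI[of _ Y]) (use NLit.prems in simp)
    then show ?thesis using True by simp
  qed (use NLit.prems in simp)
next
  case (Lit q)
  show ?case
  proof (cases "q = p")
    case True
    have "Y = {}"
    proof (rule equals0I)
      fix s assume s: "s \<in> Y"
      have "\<not> s p" using Lit.prems(1) s by (rule bspec)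
      have aq: "\<forall>s\<in>Y. s q" using Lit.prems(2) by (simp only: sat.simps)
      have "\<not> s p" using Lit.prems(1) s by (rule bspec)
      moreover have "s q" by (rule bspec[OF aq s])
      ultimately show False using True by simp
    qed
    then show ?thesis using True by simp
  qed (use Lit.prems in simp)
next
  case (Dep as b) show ?case unfolding subst_bot.simps sat.simps
  proof (intro ballI impI)
    fix s s' assume s: "s \<in> Y" "s' \<in> Y" and e: "cevals s (map (csubst p CFalse) as) = cevals s' (map (csubst p CFalse) as)"
    have ps: "\<not> s p" "\<not> s' p" using s Dep(1) by auto
    have "cevals s as = cevals s' as" using e F2[of s p as, OF ps(1)] F2[of s' p as, OF ps(2)] by argo
    moreover have d: "\<forall>s\<in>Y. \<forall>s'\<in>Y. cevals s as = cevals s' as \<longrightarrow> ceval s b = ceval s' b" using Dep(2) by (simp only: sat.simps)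
    ultimately have "ceval s b = ceval s' b" using d[rule_format, OF s(1) s(2)] by blast
    then show "ceval s (csubst p CFalse b) = ceval s' (csubst p CFalse b)" using F1[of s p b, OF ps(1)] F1[of s' p b, OF ps(2)] by argo
  qed
next
  case (Incl as bs)
  show ?case unfolding subst_bot.simps sat.simps
  proof
    fix s assume s: "s \<in> Y"
    with Incl obtain s' where "s' \<in> Y" "cevals s as = cevals s' bs" by auto
    note h = this
    have ps: "\<not> s p" "\<not> s' p" using s h(1) Incl(1) by auto
    show "\<exists>s'\<in>Y. cevals s (map (csubst p CFalse) as) = cevals s' (map (csubst p CFalse) bs)"
      by (rule bexI[of _ s']) (use h F2[of s p as, OF ps(1)] F2[of s' p bs, OF ps(2)] in simp_all)
  qed
next
  case (Indep as bs)
  show ?case unfolding subst_bot.simps sat.simps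
  proof (intro ballI)
    fix s s' assume s: "s \<in> Y" "s' \<in> Y"
    with Indep obtain s'' where "s'' \<in> Y" "cevals s'' as = cevals s as" "cevals s'' bs = cevals s' bs" by force
    note h = this
    have ps: "\<not> s p" "\<not> s' p" "\<not> s'' p" using s h(1) Indep(1) by auto
    show "\<exists>s''\<in>Y. cevals s'' (map (csubst p CFalse) as) = cevals s (map (csubst p CFalse) as) \<and> cevals s'' (map (csubst p CFalse) bs) = cevals s' (map (csubst p CFalse) bs)"
      by (rule bexI[of _ s'']) (use h F2[of s p as, OF ps(1)] F2[of s' p bs, OF ps(2)] F2[of s'' p as, OF ps(3)] F2[of s'' p bs, OF ps(3)] in simp_all)
  qed
next
  case (Tensor f g)
  from Tensor.prems obtain X1 X2 where u: "Y = X1 \<union> X2" and h: "sat X1 f" "sat X2 g" by auto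
  have "sat X1 (subst_bot p f)" by (rule Tensor(1)) (use u h Tensor.prems in auto)
  moreover have "sat X2 (subst_bot p g)" by (rule Tensor(2)) (use u h Tensor.prems in auto)
  ultimately show ?case using u by (simp only: subst_bot.simps sat.simps) blast
next
  case (Star f g)
  show ?case
  proof (cases "Y = {}")
    case False
    with Star.prems obtain X1 X2 where n: "X1 \<noteq> {}" "X2 \<noteq> {}" and u: "Y = X1 \<union> X2" and h: "sat X1 f" "sat X2 g" by auto
    have "sat X1 (subst_bot p f)" by (rule Star(1)) (use u h Star.prems in auto)
    moreover have "sat X2 (subst_bot p g)" by (rule Star(2)) (use u h Star.prems in auto)
    ultimately show ?thesis using u n by (simp only: subst_bot.simps sat.simps) blast
  qed simp
next
  case (TOr f g)
  from TOr.prems(2) have "sat Y f \<or> sat Y g" by simp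
  then show ?case
  proof
    assume "sat Y f" then have "sat Y (subst_bot p f)" by (rule TOr(1)[OF TOr.prems(1)])
    then show ?thesis by simp
  next
    assume "sat Y g" then have "sat Y (subst_bot p g)" by (rule TOr(2)[OF TOr.prems(1)])
    then show ?thesis by simp
  qed
qed simp_all

theorem mainTheorem1:
  fixes phi :: "'p tform" and p :: 'p and X :: "'p team"
  assumes "downward_closed phi"
    and "sat X phi"
  shows "sat X (Tensor (subst_top p phi) (subst_bot p phi))"
proof -
  define A where "A = {s\<in>X. s p}"
  define B where "B = {s\<in>X. \<not> s p}"
  have dc: "\<And>Y. Y \<subseteq> X \<Longrightarrow> sat Y phi"
    using assms unfolding downward_closed_def by blast
  have a: "sat A phi" by (rule dc) (simp add: A_def)
  have b: "sat B phi" by (rule dc) (simp add: B_def)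
  have ta: "sat A (subst_top p phi)" by (rule top_lemma[OF _ a]) (simp add: A_def)
  have tb: "sat B (subst_bot p phi)" by (rule bot_lemma[OF _ b]) (simp add: B_def)
  have u: "X = A \<union> B" by (auto simp: A_def B_def)
  show ?thesis unfolding sat.simps using ta tb u by blast
qed

end
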